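(* Let $P \in \mathbb{N}_0^{\sigma}$ and $w \in \Sigma^{*|_P}$. Every maximal clique of $G(P)$ containing $w$ is of the form $\{w\} \cup \{ w \circ (i,j) \mid i \in \mathrm{Pos}(w,x)\}$ for some symbol $x \in \Sigma$ and some position $j \in [n]$ with $w[j] \neq x$.
   Context: Alphabet $\Sigma = [\sigma]$. For a word $w$ of length $n$, $w[i]$ is its $i$-th symbol. The Parikh vector $P(w) \in \mathbb{N}_0^{\sigma}$ has $P(w)[a] = |\{i \in [n] : w[i]=a\}|$. For $P \in \mathbb{N}_0^\sigma$, $n := \sum_a P[a]$ and $\Sigma^{*|_P}$ is the set of words $w$ with $P(w)=P$. For $i \neq j$ with $w[i]\neq w[j]$, the 2-swap $w\circ(i,j)$ exchanges the symbols at positions $i$ and $j$. The configuration graph $G(P)$ has vertex set $\Sigma^{*|_P}$ and an edge $\{w,u\}$ whenever $u = w\circ(i,j)$ for some 2-swap. $\mathrm{Pos}(w,x) = \{i \in [n] : w[i]=x\}$. A maximal clique is a clique not contained in a strictly larger clique. *)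

theory Defs
  imports Main
begin

(* Alphabet [sigma] = {1..sigma}. Words are lists; positions are 0-based list
   indices 0..<length w (corresponding to [n] = {1..n} shifted by one). *)

definition alphabet :: "nat \<Rightarrow> nat set" where
  "alphabet \<sigma> = {1..\<sigma>}"

definition Pos :: "nat list \<Rightarrow> nat \<Rightarrow> nat set" where
  "Pos w x = {i. i < length w \<and> w ! i = x}"

definition parikh :: "nat list \<Rightarrow> nat \<Rightarrow> nat" where
  "parikh w a = card (Pos w a)"

(* Parikh vectors P in N_0^sigma are functions nat => nat, only the values on
   {1..sigma} matter. n := sum of P over the alphabet. *)
definition word_len :: "nat \<Rightarrow> (nat \<Rightarrow> nat) \<Rightarrow> nat" where
  "word_len \<sigma> P = (\<Sum>a\<in>alphabet \<sigma>. P a)"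

definition words :: "nat \<Rightarrow> (nat \<Rightarrow> nat) \<Rightarrow> nat list set" where
  "words \<sigma> P = {w. set w \<subseteq> alphabet \<sigma> \<and> (\<forall>a\<in>alphabet \<sigma>. parikh w a = P a)}"

definition swap :: "nat list \<Rightarrow> nat \<Rightarrow> nat \<Rightarrow> nat list" where
  "swap w i j = w[i := w ! j, j := w ! i]"

definition G_edge :: "nat \<Rightarrow> (nat \<Rightarrow> nat) \<Rightarrow> nat list \<Rightarrow> nat list \<Rightarrow> bool" where
  "G_edge \<sigma> P w u \<longleftrightarrow> w \<in> words \<sigma> P \<and> u \<in> words \<sigma> P \<and>
     (\<exists>i j. i < length w \<and> j < length w \<and> i \<noteq> j \<and> w ! i \<noteq> w ! j \<and> u = swap w i j)"

definition is_clique :: "nat \<Rightarrow> (nat \<Rightarrow> nat) \<Rightarrow> nat list set \<Rightarrow> bool" where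
  "is_clique \<sigma> P C \<longleftrightarrow> C \<subseteq> words \<sigma> P \<and>
     (\<forall>u\<in>C. \<forall>v\<in>C. u \<noteq> v \<longrightarrow> G_edge \<sigma> P u v)"

definition is_maximal_clique :: "nat \<Rightarrow> (nat \<Rightarrow> nat) \<Rightarrow> nat list set \<Rightarrow> bool" where
  "is_maximal_clique \<sigma> P C \<longleftrightarrow> is_clique \<sigma> P C \<and>
     \<not> (\<exists>C'. is_clique \<sigma> P C' \<and> C \<subset> C')"

end

theory Submission imports Defs "HOL-Library.Multiset" begin

lemma swap_nth: "i < length w \<Longrightarrow> j < length w \<Longrightarrow> r < length w \<Longrightarrow>
  swap w i j ! r = (if r = j then w!i else if r = i then w!j else w!r)"
  unfolding swap_def by (auto simp: nth_list_update)

lemma swap_len[simp]: "length (swap w i j) = length w" by (simp add: swap_def)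

lemma swap_comm: "i < length w \<Longrightarrow> j < length w \<Longrightarrow> swap w i j = swap w j i"
  by (rule nth_equalityI) (auto simp: swap_nth)

lemma adj:
  assumes "i < length w" "j < length w" "k < length w" "l < length w"
    "w!i \<noteq> w!j" "w!k \<noteq> w!l" "p < length w" "q < length w"
    "swap w k l = swap (swap w i j) p q" "swap w i j \<noteq> swap w k l"
  shows "(i=k \<and> w!j = w!l) \<or> (i=l \<and> w!j=w!k) \<or> (j=k \<and> w!i=w!l) \<or> (j=l \<and> w!i=w!k)"
proof -
  let ?u = "swap w i j" and ?v = "swap w k l"
  have e: "\<And>r. r < length w \<Longrightarrow> ?v ! r \<noteq> ?u ! r \<Longrightarrow> r = p \<or> r = q"
    using assms(7-9) by (auto simp: swap_nth split: if_splits)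
  have u: "\<And>r. r < length w \<Longrightarrow> ?u ! r = (if r = j then w!i else if r = i then w!j else w!r)"
    using assms(1-6) by (simp add: swap_nth)
  have v: "\<And>r. r < length w \<Longrightarrow> ?v ! r = (if r = l then w!k else if r = k then w!l else w!r)"
    using assms(1-6) by (simp add: swap_nth)
  have ij: "i \<noteq> j" "k \<noteq> l" using assms by auto
  have inter: "i = k \<or> i = l \<or> j = k \<or> j = l"
  proof (rule ccontr)
    assume "\<not> ?thesis"
    hence d: "i \<noteq> k" "i \<noteq> l" "j \<noteq> k" "j \<noteq> l" by auto
    have "i = p \<or> i = q" using e[OF assms(1)] u[OF assms(1)] v[OF assms(1)] d ij assms(5) by auto
    moreover have "j = p \<or> j = q" using e[OF assms(2)] u[OF assms(2)] v[OF assms(2)] d ij assms(5) by auto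
    moreover have "k = p \<or> k = q" using e[OF assms(3)] u[OF assms(3)] v[OF assms(3)] d ij assms(6) by auto
    ultimately show False using d ij by auto
  qed
  have notboth: "\<not> ({i,j} = {k,l})"
  proof
    assume "{i,j} = {k,l}"
    hence "(i = k \<and> j = l) \<or> (i = l \<and> j = k)" by (auto simp: doubleton_eq_iff)
    thus False using assms(10) swap_comm[OF assms(1,2)] by auto
  qed
  show ?thesis
  proof -
    { assume a: "i = k" hence b: "j \<noteq> l" using notboth by auto
      have "j = p \<or> j = q" using e[OF assms(2)] u[OF assms(2)] v[OF assms(2)] a b ij assms(5) by auto
      moreover have "l = p \<or> l = q" using e[OF assms(4)] u[OF assms(4)] v[OF assms(4)] a b ij assms(6) by auto
      ultimately have "i \<noteq> p \<and> i \<noteq> q" using a b ij by auto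
      hence "w!j = w!l" using e[OF assms(1)] u[OF assms(1)] v[OF assms(1)] a b ij by (metis (full_types))
      hence ?thesis using a by auto }
    moreover
    { assume a: "i = l" hence b: "j \<noteq> k" using notboth by auto
      have "j = p \<or> j = q" using e[OF assms(2)] u[OF assms(2)] v[OF assms(2)] a b ij assms(5) by auto
      moreover have "k = p \<or> k = q" using e[OF assms(3)] u[OF assms(3)] v[OF assms(3)] a b ij assms(6) by auto
      ultimately have "i \<noteq> p \<and> i \<noteq> q" using a b ij by auto
      hence "w!j = w!k" using e[OF assms(1)] u[OF assms(1)] v[OF assms(1)] a b ij by (metis (full_types))
      hence ?thesis using a by auto }
    moreover
    { assume a: "j = k" hence b: "i \<noteq> l" using notboth by auto
      have "i = p \<or> i = q" using e[OF assms(1)] u[OF assms(1)] v[OF assms(1)] a b ij assms(5) by auto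
      moreover have "l = p \<or> l = q" using e[OF assms(4)] u[OF assms(4)] v[OF assms(4)] a b ij assms(6) by auto
      ultimately have "j \<noteq> p \<and> j \<noteq> q" using a b ij by auto
      hence "w!i = w!l" using e[OF assms(2)] u[OF assms(2)] v[OF assms(2)] a b ij by (metis (full_types))
      hence ?thesis using a by auto }
    moreover
    { assume a: "j = l" hence b: "i \<noteq> k" using notboth by auto
      have "i = p \<or> i = q" using e[OF assms(1)] u[OF assms(1)] v[OF assms(1)] a b ij assms(5) by auto
      moreover have "k = p \<or> k = q" using e[OF assms(3)] u[OF assms(3)] v[OF assms(3)] a b ij assms(6) by auto
      ultimately have "j \<noteq> p \<and> j \<noteq> q" using a b ij by auto
      hence "w!i = w!k" using e[OF assms(2)] u[OF assms(2)] v[OF assms(2)] a b ij by (metis (full_types))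
      hence ?thesis using a by auto }
    ultimately show ?thesis using inter by blast
  qed
qed

lemma star_step:
  assumes "a < length w" "c < length w" "m < length w" "e < length w" "f < length w"
    "a \<noteq> c" "w!a = w!c" "w!m \<noteq> w!a" "w!e \<noteq> w!f"
    "(a=e \<and> w!m = w!f) \<or> (a=f \<and> w!m=w!e) \<or> (m=e \<and> w!a=w!f) \<or> (m=f \<and> w!a=w!e)"
    "(c=e \<and> w!m = w!f) \<or> (c=f \<and> w!m=w!e) \<or> (m=e \<and> w!c=w!f) \<or> (m=f \<and> w!c=w!e)"
  shows "\<exists>e'. e' < length w \<and> swap w e f = swap w e' m \<and> w!e' = w!a"
proof -
  have sc: "swap w e f = swap w f e" using swap_comm[OF assms(4,5)] .
  from assms(10) show ?thesis
  proof (elim disjE conjE)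
    assume h: "a = e" "w!m = w!f"
    hence "m = f" using assms(11) assms(6,7,8) by auto
    thus ?thesis using h assms(4) by auto
  next
    assume h: "a = f" "w!m = w!e"
    hence "m = e" using assms(11) assms(6,7,8) by auto
    thus ?thesis using h assms(5) sc by auto
  next
    assume h: "m = e" "w!a = w!f"
    thus ?thesis using assms(5) sc by auto
  next
    assume h: "m = f" "w!a = w!e"
    thus ?thesis using assms(4) by auto
  qed
qed

lemma parikh_mset: "parikh w a = count (mset w) a"
  unfolding parikh_def Pos_def by (simp add: count_mset count_list_eq_length_filter length_filter_conv_card eq_commute)

lemma mset_swap': "i < length w \<Longrightarrow> j < length w \<Longrightarrow> mset (swap w i j) = mset w"
  unfolding swap_def by (rule mset_swap) auto

lemma swap_words: "w \<in> words \<sigma> P \<Longrightarrow> i < length w \<Longrightarrow> j < length w \<Longrightarrow> swap w i j \<in> words \<sigma> P"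
proof -
  assume a: "w \<in> words \<sigma> P" "i < length w" "j < length w"
  have m: "mset (swap w i j) = mset w" using mset_swap'[OF a(2,3)] .
  have "set (swap w i j) = set w" using arg_cong[OF m, of set_mset] by simp
  thus ?thesis using a(1) m unfolding words_def parikh_mset by simp
qed

lemma word_len_eq:
  assumes "w \<in> words \<sigma> P" shows "word_len \<sigma> P = length w"
proof -
  have s: "set w \<subseteq> alphabet \<sigma>" and p: "\<forall>a\<in>alphabet \<sigma>. parikh w a = P a" using assms by (auto simp: words_def)
  have "word_len \<sigma> P = (\<Sum>a\<in>alphabet \<sigma>. count (mset w) a)"
    unfolding word_len_def using p by (simp add: parikh_mset)
  also have "\<dots> = size (mset w)"
    using s by (subst size_multiset_overloaded_eq) (auto intro!: sum.mono_neutral_right simp: alphabet_def)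
  finally show ?thesis by simp
qed

lemma edge_of: "G_edge \<sigma> P u v \<Longrightarrow> \<exists>p q. p < length u \<and> q < length u \<and> v = swap u p q"
  unfolding G_edge_def by blast

lemma swap_twice: "i < length w \<Longrightarrow> j < length w \<Longrightarrow> swap (swap w i j) i j = w"
  by (rule nth_equalityI) (auto simp: swap_nth)

lemma swap_other: "i < length w \<Longrightarrow> i' < length w \<Longrightarrow> j < length w \<Longrightarrow> i \<noteq> j \<Longrightarrow> i' \<noteq> j \<Longrightarrow> i \<noteq> i' \<Longrightarrow> w!i = w!i'
   \<Longrightarrow> swap w i' j = swap (swap w i j) i i'"
  by (rule nth_equalityI) (auto simp: swap_nth)


lemma star_clique:
  assumes w: "w \<in> words \<sigma> P" and j: "j < length w" and x: "w!j \<noteq> x"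
  shows "is_clique \<sigma> P ({w} \<union> {swap w i j | i. i \<in> Pos w x})"
  unfolding is_clique_def
proof (intro conjI ballI impI)
  show "{w} \<union> {swap w i j |i. i \<in> Pos w x} \<subseteq> words \<sigma> P"
    using w j swap_words[OF w] by (auto simp: Pos_def)
next
  fix u v assume u: "u \<in> {w} \<union> {swap w i j |i. i \<in> Pos w x}" and v: "v \<in> {w} \<union> {swap w i j |i. i \<in> Pos w x}"
    and uv: "u \<noteq> v"
  have inw: "\<And>i. i \<in> Pos w x \<Longrightarrow> swap w i j \<in> words \<sigma> P" using swap_words[OF w] j by (auto simp: Pos_def)
  show "G_edge \<sigma> P u v"
  proof -
    { fix i assume i: "i \<in> Pos w x" and "u = w" "v = swap w i j"
      have il: "i < length w" "w!i = x" using i by (auto simp: Pos_def)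
      hence "i \<noteq> j" "w!i \<noteq> w!j" using x by auto
      hence ?thesis using inw[OF i] w j il \<open>u = w\<close> \<open>v = swap w i j\<close> unfolding G_edge_def by blast }
    moreover
    { fix i assume i: "i \<in> Pos w x" and h: "v = w" "u = swap w i j"
      have il: "i < length w" "w!i = x" using i by (auto simp: Pos_def)
      have "v = swap u i j" using h swap_twice[OF il(1) j] by simp
      moreover have "u!i \<noteq> u!j" "i \<noteq> j" using h il j x by (auto simp: swap_nth)
      ultimately have ?thesis using inw[OF i] w j il h unfolding G_edge_def by auto }
    moreover
    { fix i i' assume i: "i \<in> Pos w x" and i': "i' \<in> Pos w x" and h: "u = swap w i j" "v = swap w i' j"
      have il: "i < length w" "w!i = x" "i' < length w" "w!i' = x" using i i' by (auto simp: Pos_def)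
      have ii: "i \<noteq> i'" using uv h by auto
      have "v = swap u i i'" using h swap_other[OF il(1) il(3) j] il x ii by auto
      moreover have "u!i \<noteq> u!i'" "i \<noteq> i'" using h il j x ii by (auto simp: swap_nth)
      ultimately have ?thesis using inw[OF i] inw[OF i'] w j il h unfolding G_edge_def by auto }
    ultimately show ?thesis using u v uv by blast
  qed
qed

theorem corollary1:
  fixes \<sigma> :: nat and P :: "nat \<Rightarrow> nat" and w :: "nat list" and C :: "nat list set"
  assumes "2 \<le> \<sigma>" and "0 < word_len \<sigma> P"
    and "w \<in> words \<sigma> P"
    and "is_maximal_clique \<sigma> P C" and "w \<in> C"
  shows "\<exists>x\<in>alphabet \<sigma>. \<exists>j < word_len \<sigma> P. w ! j \<noteq> x \<and>
           C = {w} \<union> {swap w i j | i. i \<in> Pos w x}"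
proof -
  define n where "n = length w"
  have wl: "word_len \<sigma> P = n" using word_len_eq[OF assms(3)] n_def by simp
  have cl: "is_clique \<sigma> P C" and mx: "\<And>C'. is_clique \<sigma> P C' \<Longrightarrow> \<not> C \<subset> C'"
    using assms(4) unfolding is_maximal_clique_def by auto
  have nbr: "\<And>u. u \<in> C \<Longrightarrow> u \<noteq> w \<Longrightarrow> \<exists>i j. i < n \<and> j < n \<and> i \<noteq> j \<and> w!i \<noteq> w!j \<and> u = swap w i j"
  proof -
    fix u assume "u \<in> C" "u \<noteq> w"
    hence "G_edge \<sigma> P w u" using cl assms(5) unfolding is_clique_def by auto
    thus "\<exists>i j. i < n \<and> j < n \<and> i \<noteq> j \<and> w!i \<noteq> w!j \<and> u = swap w i j"
      unfolding G_edge_def n_def by blast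
  qed
  have edge: "\<And>u v. u \<in> C \<Longrightarrow> v \<in> C \<Longrightarrow> u \<noteq> v \<Longrightarrow> \<exists>p q. p < n \<and> q < n \<and> v = swap u p q"
  proof -
    fix u v assume "u \<in> C" "v \<in> C" "u \<noteq> v"
    hence "G_edge \<sigma> P u v" using cl unfolding is_clique_def by blast
    hence uw: "u \<in> words \<sigma> P" and e: "\<exists>p q. p < length u \<and> q < length u \<and> v = swap u p q"
      using edge_of[of \<sigma> P u v] unfolding G_edge_def by blast+
    have "length u = n" using word_len_eq[OF assms(3)] word_len_eq[OF uw] n_def by simp
    thus "\<exists>p q. p < n \<and> q < n \<and> v = swap u p q" using e by auto
  qed
  have alph: "\<And>i. i < n \<Longrightarrow> w!i \<in> alphabet \<sigma>"
    using assms(3) unfolding words_def n_def by auto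
  have goal: "\<exists>x\<in>alphabet \<sigma>. \<exists>j < n. w ! j \<noteq> x \<and> C \<subseteq> {w} \<union> {swap w i j | i. i \<in> Pos w x}"
  proof (cases "C \<subseteq> {w}")
    case True
    have z: "0 < n" using assms(2) wl by simp
    obtain x where x: "x \<in> alphabet \<sigma>" "x \<noteq> w!0"
    proof (cases "w!0 = 1")
      case True thus ?thesis using that[of 2] assms(1) by (auto simp: alphabet_def)
    next
      case False thus ?thesis using that[of 1] assms(1) by (auto simp: alphabet_def)
    qed
    have "C \<subseteq> {w} \<union> {swap w i 0 | i. i \<in> Pos w x}" using True by blast
    hence "\<exists>j<n. w ! j \<noteq> x \<and> C \<subseteq> {w} \<union> {swap w i j |i. i \<in> Pos w x}"
      using x z by (intro exI[of _ 0]) auto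
    thus ?thesis using x by blast
  next
    case False
    then obtain u0 where u0: "u0 \<in> C" "u0 \<noteq> w" by blast
    then obtain a b where ab: "a < n" "b < n" "a \<noteq> b" "w!a \<noteq> w!b" "u0 = swap w a b" using nbr by blast
    show ?thesis
    proof (cases "C \<subseteq> {w, u0}")
      case True
      have "a \<in> Pos w (w!a)" using ab n_def by (auto simp: Pos_def)
      hence "C \<subseteq> {w} \<union> {swap w i b |i. i \<in> Pos w (w!a)}" using True ab by blast
      hence "\<exists>j<n. w ! j \<noteq> w!a \<and> C \<subseteq> {w} \<union> {swap w i j |i. i \<in> Pos w (w!a)}"
        using ab by (intro exI[of _ b]) auto
      thus ?thesis using alph[OF ab(1)] by blast
    next
      case False
      then obtain u1 where u1: "u1 \<in> C" "u1 \<noteq> w" "u1 \<noteq> u0" by blast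
      then obtain c d where cd: "c < n" "d < n" "c \<noteq> d" "w!c \<noteq> w!d" "u1 = swap w c d" using nbr by blast
      obtain p q where pq: "p < n" "q < n" "u1 = swap u0 p q" using edge[OF u0(1) u1(1)] u1 by metis
      have ad: "(a=c \<and> w!b = w!d) \<or> (a=d \<and> w!b=w!c) \<or> (b=c \<and> w!a=w!d) \<or> (b=d \<and> w!a=w!c)"
        using adj[of a w b c d p q] ab cd pq u1 n_def by auto
      obtain a' c' m where N: "a' < n" "c' < n" "m < n" "u0 = swap w a' m" "u1 = swap w c' m"
        "w!a' = w!c'" "w!m \<noteq> w!a'"
      proof -
        have sab: "swap w a b = swap w b a" and scd: "swap w c d = swap w d c"
          using swap_comm ab cd n_def by auto
        from ad show ?thesis
        proof (elim disjE conjE)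
          assume "a = c" "w!b = w!d" thus ?thesis using that[of b d a] ab cd sab scd by auto
        next
          assume "a = d" "w!b = w!c" thus ?thesis using that[of b c a] ab cd sab scd by auto
        next
          assume "b = c" "w!a = w!d" thus ?thesis using that[of a d b] ab cd sab scd by auto
        next
          assume "b = d" "w!a = w!c" thus ?thesis using that[of a c b] ab cd sab scd by auto
        qed
      qed
      have ac: "a' \<noteq> c'" using N u1 by auto
      have sub: "C \<subseteq> {w} \<union> {swap w i m | i. i \<in> Pos w (w!a')}"
      proof
        fix u assume u: "u \<in> C"
        show "u \<in> {w} \<union> {swap w i m | i. i \<in> Pos w (w!a')}"
        proof (cases "u = w \<or> u = u0 \<or> u = u1")
          case True
          have "a' \<in> Pos w (w!a')" "c' \<in> Pos w (w!a')" using N n_def by (auto simp: Pos_def)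
          thus ?thesis using True N by auto
        next
          case False
          then obtain e f where ef: "e < n" "f < n" "e \<noteq> f" "w!e \<noteq> w!f" "u = swap w e f" using nbr u by blast
          obtain p q where pq: "p < n" "q < n" "u = swap u0 p q" using edge[OF u0(1) u] False by metis
          have d1: "(a'=e \<and> w!m = w!f) \<or> (a'=f \<and> w!m=w!e) \<or> (m=e \<and> w!a'=w!f) \<or> (m=f \<and> w!a'=w!e)"
            using adj[of a' w m e f p q] N ef pq False n_def by auto
          obtain p' q' where pq': "p' < n" "q' < n" "u = swap u1 p' q'" using edge[OF u1(1) u] False by metis
          have d2: "(c'=e \<and> w!m = w!f) \<or> (c'=f \<and> w!m=w!e) \<or> (m=e \<and> w!c'=w!f) \<or> (m=f \<and> w!c'=w!e)"
            using adj[of c' w m e f p' q'] N ef pq' False n_def by auto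
          obtain e' where "e' < length w" "swap w e f = swap w e' m" "w!e' = w!a'"
            using star_step[of a' w c' m e f] N ac ef d1 d2 n_def by auto
          thus ?thesis using ef by (auto simp: Pos_def)
        qed
      qed
      have "\<exists>j<n. w ! j \<noteq> w!a' \<and> C \<subseteq> {w} \<union> {swap w i j |i. i \<in> Pos w (w!a')}"
        using sub N by (intro exI[of _ m]) auto
      thus ?thesis using alph[OF N(1)] by blast
    qed
  qed
  then obtain x j where xj: "x \<in> alphabet \<sigma>" "j < n" "w!j \<noteq> x" "C \<subseteq> {w} \<union> {swap w i j | i. i \<in> Pos w x}"
    by blast
  have "is_clique \<sigma> P ({w} \<union> {swap w i j | i. i \<in> Pos w x})"
    using star_clique[OF assms(3)] xj n_def by auto
  hence eq: "C = {w} \<union> {swap w i j | i. i \<in> Pos w x}" using mx xj(4) by blast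
  have "j < word_len \<sigma> P" using xj(2) wl by simp
  hence "\<exists>j'<word_len \<sigma> P. w ! j' \<noteq> x \<and> C = {w} \<union> {swap w i j' | i. i \<in> Pos w x}"
    using xj(3) eq by blast
  thus ?thesis using xj(1) by blast
qed

end
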